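(* Let $(X,d,\kappa)$ be a digital metric space with $|X|>1$. Let $S,T:X\to X$ be such that $x\neq y$ implies $d(S(x),S(y))<d(T(x),T(y))$. Then $T$ is one-to-one. If, further, $X$ is finite, then $T$ is a bijection and $S$ is neither one-to-one nor onto.
   Context: A digital metric space is a triple $(X,d,\kappa)$ where $X\subset\mathbb{Z}^n$ for some positive integer $n$, $\kappa$ is an adjacency relation on $X$, and $d$ is a metric on $X$. *)

theory Defs
  imports "HOL-Analysis.Analysis"
begin

text \<open>Points of Z^n are modelled as int ^ 'n for a finite index type 'n
  (n = CARD('n), arbitrary).\<close>

definition metric_on :: "'a set \<Rightarrow> ('a \<Rightarrow> 'a \<Rightarrow> real) \<Rightarrow> bool" where
  "metric_on X d \<longleftrightarrow>
     (\<forall>x\<in>X. \<forall>y\<in>X. 0 \<le> d x y \<and> (d x y = 0 \<longleftrightarrow> x = y) \<and> d x y = d y x) \<and>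
     (\<forall>x\<in>X. \<forall>y\<in>X. \<forall>z\<in>X. d x z \<le> d x y + d y z)"

definition adjacency_on :: "'a set \<Rightarrow> ('a \<Rightarrow> 'a \<Rightarrow> bool) \<Rightarrow> bool" where
  "adjacency_on X \<kappa> \<longleftrightarrow>
     (\<forall>x y. \<kappa> x y \<longrightarrow> x \<in> X \<and> y \<in> X) \<and>
     (\<forall>x y. \<kappa> x y \<longrightarrow> \<kappa> y x) \<and> (\<forall>x. \<not> \<kappa> x x)"

definition digital_metric_space ::
  "(int ^ 'n) set \<Rightarrow> (int ^ 'n \<Rightarrow> int ^ 'n \<Rightarrow> real) \<Rightarrow> (int ^ 'n \<Rightarrow> int ^ 'n \<Rightarrow> bool) \<Rightarrow> bool" where
  "digital_metric_space X d \<kappa> \<longleftrightarrow> metric_on X d \<and> adjacency_on X \<kappa>"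

end

theory Submission
  imports Defs
begin

lemma pair_sum_bij:
  fixes f :: "'a \<Rightarrow> 'a" and d :: "'a \<Rightarrow> 'a \<Rightarrow> real"
  assumes "bij_betw f X X"
  shows "(\<Sum>p\<in>{(x,y). x\<in>X \<and> y\<in>X \<and> x\<noteq>y}. d (f (fst p)) (f (snd p)))
       = (\<Sum>p\<in>{(x,y). x\<in>X \<and> y\<in>X \<and> x\<noteq>y}. d (fst p) (snd p))"
proof -
  let ?P = "{(x,y). x\<in>X \<and> y\<in>X \<and> x\<noteq>y}"
  let ?g = "\<lambda>p. (f (fst p), f (snd p))"
  have inj: "inj_on f X" and im: "f ` X = X" using assms by (auto simp: bij_betw_def)
  have "inj_on ?g ?P" using inj by (auto simp: inj_on_def)
  moreover have "?g ` ?P = ?P"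
  proof
    show "?g ` ?P \<subseteq> ?P" using inj im by (auto simp: inj_on_def)
    show "?P \<subseteq> ?g ` ?P"
    proof
      fix p assume "p \<in> ?P"
      then obtain a b where p: "p = (a,b)" "a\<in>X" "b\<in>X" "a\<noteq>b" by auto
      from im p obtain a' b' where "a'\<in>X" "b'\<in>X" "f a' = a" "f b' = b" by (metis imageE)
      then show "p \<in> ?g ` ?P" using p by (auto intro!: image_eqI[where x="(a',b')"])
    qed
  qed
  ultimately show ?thesis
    using sum.reindex[of ?g ?P "\<lambda>p. d (fst p) (snd p)"] by (simp add: o_def)
qed

theorem proposition6p3:
  fixes X :: "(int ^ 'n) set"
    and d :: "int ^ 'n \<Rightarrow> int ^ 'n \<Rightarrow> real"
    and \<kappa> :: "int ^ 'n \<Rightarrow> int ^ 'n \<Rightarrow> bool"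
    and S T :: "int ^ 'n \<Rightarrow> int ^ 'n"
  assumes "digital_metric_space X d \<kappa>"
    and "card X > 1 \<or> infinite X"
    and "S ` X \<subseteq> X" and "T ` X \<subseteq> X"
    and "\<And>x y. x \<in> X \<Longrightarrow> y \<in> X \<Longrightarrow> x \<noteq> y \<Longrightarrow> d (S x) (S y) < d (T x) (T y)"
  shows "inj_on T X \<and>
         (finite X \<longrightarrow> bij_betw T X X \<and> \<not> inj_on S X \<and> S ` X \<noteq> X)"
proof -
  have m: "metric_on X d" using assms(1) digital_metric_space_def by blast
  have injT: "inj_on T X"
  proof (rule inj_onI, rule ccontr)
    fix x y assume xy: "x \<in> X" "y \<in> X" "T x = T y" "x \<noteq> y"
    have "d (T x) (T y) = 0" using m xy assms(4) unfolding metric_on_def by auto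
    moreover have "d (S x) (S y) \<ge> 0" using m xy assms(3) unfolding metric_on_def by (meson image_subset_iff)
    ultimately show False using assms(5)[OF xy(1,2,4)] by simp
  qed
  moreover have "finite X \<longrightarrow> bij_betw T X X \<and> \<not> inj_on S X \<and> S ` X \<noteq> X"
  proof
    assume fin: "finite X"
    have bT: "bij_betw T X X"
      using injT assms(4) fin by (simp add: bij_betw_def endo_inj_surj)
    have nS: "\<not> inj_on S X"
    proof
      assume iS: "inj_on S X"
      have bS: "bij_betw S X X"
        using iS assms(3) fin by (simp add: bij_betw_def endo_inj_surj)
      let ?P = "{(x,y). x\<in>X \<and> y\<in>X \<and> x\<noteq>y}"
      have finP: "finite ?P"
        by (rule finite_subset[of _ "X \<times> X"]) (use fin in auto)
      from assms(2) fin have "card X > 1" by auto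
      then obtain a b where ab: "a \<in> X" "b \<in> X" "a \<noteq> b"
        using card_le_Suc0_iff_eq[OF fin] by (metis One_nat_def not_le)
      have "(\<Sum>p\<in>?P. d (S (fst p)) (S (snd p))) < (\<Sum>p\<in>?P. d (T (fst p)) (T (snd p)))"
        by (rule sum_strict_mono_ex1[OF finP]) (use assms(5) ab in \<open>auto intro!: less_imp_le\<close>)
      then show False using pair_sum_bij[OF bS, of d] pair_sum_bij[OF bT, of d] by simp
    qed
    moreover have "S ` X \<noteq> X"
      using nS fin by (metis card_image_le endo_inj_surj order_refl eq_card_imp_inj_on)
    ultimately show "bij_betw T X X \<and> \<not> inj_on S X \<and> S ` X \<noteq> X" using bT by blast
  qed
  ultimately show ?thesis by blast
qed

end
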